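(* Let $\alpha$ be a graph function on a strongly connected digraph $G$. Applying a lowering operation (at any vertex) to $\alpha$ cannot increase the raising imbalance $\rho^R_v$ at any vertex $v$. Symmetrically, applying a raising operation cannot increase the lowering imbalance $\rho^L_v$ at any vertex $v$.
   Context: $G$ is a strongly connected directed graph (self-loops allowed). A graph function assigns a real weight $\alpha_{uv}$ to each edge $(u,v)$. Let $\alpha_v^{\text{in}}=\max_{u:(u,v)\in G}\alpha_{uv}$, $\alpha_v^{\text{out}}=\max_{w:(v,w)\in G}\alpha_{vw}$. A balancing operation at $v$ adds $(\alpha_v^{\text{out}}-\alpha_v^{\text{in}})/2$ to every edge weight $\alpha_{uv}$ with $u\neq v$, subtracts it from every $\alpha_{vw}$ with $w\ne v$, and leaves a self-loop at $v$ unchanged. $\rho_v^R=\max\{0,\alpha_v^{\text{out}}-\alpha_v^{\text{in}}\}$, $\rho_v^L=\max\{0,\alpha_v^{\text{in}}-\alpha_v^{\text{out}}\}$. A raising operation at $v$ performs the balancing operation at $v$ if $\rho^R_v>0$ and nothing otherwise; a lowering operation at $v$ performs it if $\rho^L_v>0$ and nothing otherwise. *)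

theory Defs
  imports Complex_Main
begin

definition strongly_connected_digraph :: "'a set \<Rightarrow> ('a \<times> 'a) set \<Rightarrow> bool" where
  "strongly_connected_digraph V E \<longleftrightarrow>
     finite V \<and> V \<noteq> {} \<and> E \<subseteq> V \<times> V \<and> (\<forall>u\<in>V. \<forall>v\<in>V. (u, v) \<in> E\<^sup>+)"

text \<open>A graph function assigns a real weight alpha u v to each edge (u,v);
values off the edge set are irrelevant.\<close>
type_synonym 'a graph_fun = "'a \<Rightarrow> 'a \<Rightarrow> real"

definition alpha_in :: "('a \<times> 'a) set \<Rightarrow> 'a graph_fun \<Rightarrow> 'a \<Rightarrow> real" where
  "alpha_in E \<alpha> v = Max {\<alpha> u v | u. (u, v) \<in> E}"

definition alpha_out :: "('a \<times> 'a) set \<Rightarrow> 'a graph_fun \<Rightarrow> 'a \<Rightarrow> real" where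
  "alpha_out E \<alpha> v = Max {\<alpha> v w | w. (v, w) \<in> E}"

definition balance :: "('a \<times> 'a) set \<Rightarrow> 'a graph_fun \<Rightarrow> 'a \<Rightarrow> 'a graph_fun" where
  "balance E \<alpha> v = (let d = (alpha_out E \<alpha> v - alpha_in E \<alpha> v) / 2 in
     (\<lambda>x y. if x \<noteq> v \<and> y = v then \<alpha> x y + d
            else if x = v \<and> y \<noteq> v then \<alpha> x y - d
            else \<alpha> x y))"

definition rhoR :: "('a \<times> 'a) set \<Rightarrow> 'a graph_fun \<Rightarrow> 'a \<Rightarrow> real" where
  "rhoR E \<alpha> v = max 0 (alpha_out E \<alpha> v - alpha_in E \<alpha> v)"

definition rhoL :: "('a \<times> 'a) set \<Rightarrow> 'a graph_fun \<Rightarrow> 'a \<Rightarrow> real" where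
  "rhoL E \<alpha> v = max 0 (alpha_in E \<alpha> v - alpha_out E \<alpha> v)"

definition raise_op :: "('a \<times> 'a) set \<Rightarrow> 'a graph_fun \<Rightarrow> 'a \<Rightarrow> 'a graph_fun" where
  "raise_op E \<alpha> v = (if rhoR E \<alpha> v > 0 then balance E \<alpha> v else \<alpha>)"

definition lower_op :: "('a \<times> 'a) set \<Rightarrow> 'a graph_fun \<Rightarrow> 'a \<Rightarrow> 'a graph_fun" where
  "lower_op E \<alpha> v = (if rhoL E \<alpha> v > 0 then balance E \<alpha> v else \<alpha>)"

end

theory Submission
  imports Defs
begin

lemma fin_in: "finite E \<Longrightarrow> finite {\<beta> u v | u. (u, v) \<in> E}"
proof -
  assume f: "finite E"
  have "{\<beta> u v | u. (u, v) \<in> E} \<subseteq> (\<lambda>p. \<beta> (fst p) v) ` E" by force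
  then show ?thesis using f finite_subset by blast
qed

lemma fin_out: "finite E \<Longrightarrow> finite {\<beta> v u | u. (v, u) \<in> E}"
proof -
  assume f: "finite E"
  have "{\<beta> v u | u. (v, u) \<in> E} \<subseteq> (\<lambda>p. \<beta> v (snd p)) ` E" by force
  then show ?thesis using f finite_subset by blast
qed

lemma in_ge: "finite E \<Longrightarrow> (u, v) \<in> E \<Longrightarrow> \<beta> u v \<le> alpha_in E \<beta> v"
  unfolding alpha_in_def
  by (rule Max_ge) (auto simp: fin_in)

lemma out_ge: "finite E \<Longrightarrow> (v, u) \<in> E \<Longrightarrow> \<beta> v u \<le> alpha_out E \<beta> v"
  unfolding alpha_out_def
  by (rule Max_ge) (auto simp: fin_out)

lemma in_le: "finite E \<Longrightarrow> (u0, v) \<in> E \<Longrightarrow> (\<And>u. (u, v) \<in> E \<Longrightarrow> \<beta> u v \<le> c) \<Longrightarrow> alpha_in E \<beta> v \<le> c"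
  unfolding alpha_in_def
  by (subst Max_le_iff) (auto simp: fin_in)

lemma out_le: "finite E \<Longrightarrow> (v, u0) \<in> E \<Longrightarrow> (\<And>u. (v, u) \<in> E \<Longrightarrow> \<beta> v u \<le> c) \<Longrightarrow> alpha_out E \<beta> v \<le> c"
  unfolding alpha_out_def
  by (subst Max_le_iff) (auto simp: fin_out)

lemma in_ex: "finite E \<Longrightarrow> (u0, v) \<in> E \<Longrightarrow> \<exists>u. (u, v) \<in> E \<and> \<beta> u v = alpha_in E \<beta> v"
proof -
  assume f: "finite E" and e: "(u0, v) \<in> E"
  have "finite {\<beta> u v | u. (u, v) \<in> E}"
    using f by (rule fin_in)
  moreover have "{\<beta> u v | u. (u, v) \<in> E} \<noteq> {}" using e by auto
  ultimately have "Max {\<beta> u v | u. (u, v) \<in> E} \<in> {\<beta> u v | u. (u, v) \<in> E}" by (rule Max_in)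
  then show ?thesis unfolding alpha_in_def by auto
qed

lemma out_ex: "finite E \<Longrightarrow> (v, u0) \<in> E \<Longrightarrow> \<exists>u. (v, u) \<in> E \<and> \<beta> v u = alpha_out E \<beta> v"
proof -
  assume f: "finite E" and e: "(v, u0) \<in> E"
  have "finite {\<beta> v u | u. (v, u) \<in> E}"
    using f by (rule fin_out)
  moreover have "{\<beta> v u | u. (v, u) \<in> E} \<noteq> {}" using e by auto
  ultimately have "Max {\<beta> v u | u. (v, u) \<in> E} \<in> {\<beta> v u | u. (v, u) \<in> E}" by (rule Max_in)
  then show ?thesis unfolding alpha_out_def by auto
qed

lemma sc_facts:
  assumes "strongly_connected_digraph V E" "v \<in> V"
  shows "finite E" "\<exists>u. (u, v) \<in> E" "\<exists>u. (v, u) \<in> E"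
proof -
  have fv: "finite V" and sub: "E \<subseteq> V \<times> V" and tr: "(v, v) \<in> E\<^sup>+"
    using assms unfolding strongly_connected_digraph_def by auto
  show "finite E" using fv sub finite_subset by blast
  show "\<exists>u. (u, v) \<in> E" using tr by (auto elim: tranclE)
  show "\<exists>u. (v, u) \<in> E" using tr by (auto dest: tranclD)
qed

lemma lower_R:
  assumes f: "finite E" and ein: "\<And>x. x \<in> {v, w} \<Longrightarrow> \<exists>u. (u, x) \<in> E" and eout: "\<And>x. x \<in> {v, w} \<Longrightarrow> \<exists>u. (x, u) \<in> E"
  shows "rhoR E (lower_op E \<alpha> w) v \<le> rhoR E \<alpha> v"
proof (cases "rhoL E \<alpha> w > 0")
  case False thus ?thesis by (simp add: lower_op_def)
next
  case True
  define i where "i = alpha_in E \<alpha> w"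
  define ou where "ou = alpha_out E \<alpha> w"
  define d where "d = (ou - i) / 2"
  have dneg: "d < 0" using True by (simp add: rhoL_def d_def i_def ou_def)
  define \<beta> where "\<beta> = balance E \<alpha> w"
  have b: "\<beta> x y = (if x \<noteq> w \<and> y = w then \<alpha> x y + d else if x = w \<and> y \<noteq> w then \<alpha> x y - d else \<alpha> x y)" for x y
    by (simp add: \<beta>_def balance_def d_def i_def ou_def Let_def)
  have lo: "lower_op E \<alpha> w = \<beta>" using True by (simp add: lower_op_def \<beta>_def)
  show ?thesis
  proof (cases "v = w")
    case False
    obtain u0 where u0: "(u0, v) \<in> E" using ein by blast
    obtain y0 where y0: "(v, y0) \<in> E" using eout by blast
    have "alpha_out E \<beta> v \<le> alpha_out E \<alpha> v"
    proof (rule out_le[OF f y0])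
      fix y assume y: "(v, y) \<in> E"
      have "\<alpha> v y \<le> alpha_out E \<alpha> v" by (rule out_ge[OF f y])
      then show "\<beta> v y \<le> alpha_out E \<alpha> v" using False dneg by (auto simp: b)
    qed
    moreover have "alpha_in E \<alpha> v \<le> alpha_in E \<beta> v"
    proof -
      obtain u where u: "(u, v) \<in> E" "\<alpha> u v = alpha_in E \<alpha> v" using in_ex[OF f u0] by blast
      have "\<alpha> u v \<le> \<beta> u v" using False dneg by (auto simp: b)
      also have "\<dots> \<le> alpha_in E \<beta> v" by (rule in_ge[OF f u(1)])
      finally show ?thesis using u by simp
    qed
    ultimately show ?thesis by (simp add: lo rhoR_def)
  next
    case True
    obtain u0 where u0: "(u0, w) \<in> E" using ein by blast
    obtain y0 where y0: "(w, y0) \<in> E" using eout by blast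
    obtain u where u: "(u, w) \<in> E" "\<alpha> u w = i" using in_ex[OF f u0] i_def by blast
    have "u \<noteq> w"
    proof
      assume "u = w"
      then have "i \<le> ou" using u out_ge[OF f, of w w \<alpha>] ou_def by simp
      then show False using dneg d_def by simp
    qed
    then have "i + d \<le> alpha_in E \<beta> w" using in_ge[OF f u(1), of \<beta>] u by (simp add: b)
    moreover have "alpha_out E \<beta> w \<le> ou - d"
    proof (rule out_le[OF f y0])
      fix y assume y: "(w, y) \<in> E"
      have "\<alpha> w y \<le> ou" using out_ge[OF f y] ou_def by simp
      then show "\<beta> w y \<le> ou - d" using dneg by (auto simp: b)
    qed
    ultimately show ?thesis using True by (simp add: lo rhoR_def d_def field_simps)
  qed
qed

lemma raise_L:
  assumes f: "finite E" and ein: "\<And>x. x \<in> {v, w} \<Longrightarrow> \<exists>u. (u, x) \<in> E" and eout: "\<And>x. x \<in> {v, w} \<Longrightarrow> \<exists>u. (x, u) \<in> E"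
  shows "rhoL E (raise_op E \<alpha> w) v \<le> rhoL E \<alpha> v"
proof (cases "rhoR E \<alpha> w > 0")
  case False thus ?thesis by (simp add: raise_op_def)
next
  case True
  define i where "i = alpha_in E \<alpha> w"
  define ou where "ou = alpha_out E \<alpha> w"
  define d where "d = (ou - i) / 2"
  have dpos: "d > 0" using True by (simp add: rhoR_def d_def i_def ou_def)
  define \<beta> where "\<beta> = balance E \<alpha> w"
  have b: "\<beta> x y = (if x \<noteq> w \<and> y = w then \<alpha> x y + d else if x = w \<and> y \<noteq> w then \<alpha> x y - d else \<alpha> x y)" for x y
    by (simp add: \<beta>_def balance_def d_def i_def ou_def Let_def)
  have lo: "raise_op E \<alpha> w = \<beta>" using True by (simp add: raise_op_def \<beta>_def)
  show ?thesis
  proof (cases "v = w")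
    case False
    obtain u0 where u0: "(u0, v) \<in> E" using ein by blast
    obtain y0 where y0: "(v, y0) \<in> E" using eout by blast
    have "alpha_in E \<beta> v \<le> alpha_in E \<alpha> v"
    proof (rule in_le[OF f u0])
      fix y assume y: "(y, v) \<in> E"
      have "\<alpha> y v \<le> alpha_in E \<alpha> v" by (rule in_ge[OF f y])
      then show "\<beta> y v \<le> alpha_in E \<alpha> v" using False dpos by (auto simp: b)
    qed
    moreover have "alpha_out E \<alpha> v \<le> alpha_out E \<beta> v"
    proof -
      obtain u where u: "(v, u) \<in> E" "\<alpha> v u = alpha_out E \<alpha> v" using out_ex[OF f y0] by blast
      have "\<alpha> v u \<le> \<beta> v u" using False dpos by (auto simp: b)
      also have "\<dots> \<le> alpha_out E \<beta> v" by (rule out_ge[OF f u(1)])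
      finally show ?thesis using u by simp
    qed
    ultimately show ?thesis by (simp add: lo rhoL_def)
  next
    case True
    obtain u0 where u0: "(u0, w) \<in> E" using ein by blast
    obtain y0 where y0: "(w, y0) \<in> E" using eout by blast
    obtain u where u: "(w, u) \<in> E" "\<alpha> w u = ou" using out_ex[OF f y0] ou_def by blast
    have "u \<noteq> w"
    proof
      assume "u = w"
      then have "ou \<le> i" using u in_ge[OF f, of w w \<alpha>] i_def by simp
      then show False using dpos d_def by simp
    qed
    then have "ou - d \<le> alpha_out E \<beta> w" using out_ge[OF f u(1), of \<beta>] u by (simp add: b)
    moreover have "alpha_in E \<beta> w \<le> i + d"
    proof (rule in_le[OF f u0])
      fix y assume y: "(y, w) \<in> E"
      have "\<alpha> y w \<le> i" using in_ge[OF f y] i_def by simp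
      then show "\<beta> y w \<le> i + d" using dpos by (auto simp: b)
    qed
    ultimately show ?thesis using True by (simp add: lo rhoL_def d_def field_simps)
  qed
qed

theorem proposition1:
  fixes V :: "'a set" and E :: "('a \<times> 'a) set" and \<alpha> :: "'a graph_fun"
  assumes "strongly_connected_digraph V E"
    and "w \<in> V"
  shows "(\<forall>v\<in>V. rhoR E (lower_op E \<alpha> w) v \<le> rhoR E \<alpha> v)
       \<and> (\<forall>v\<in>V. rhoL E (raise_op E \<alpha> w) v \<le> rhoL E \<alpha> v)"
  using sc_facts[OF assms(1)] assms(2) lower_R raise_L by (metis insert_iff singletonD)

end
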